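(* Strong Nash equilibria need not exist in the Sharing with Friendship game. Specifically, consider the instance with: - $n=4$ players; - friendship graph $G$ with edge set $\{\{1,2\},\{3,4\}\}$; - $m=2$ machines with values $p_1=2+\epsilon$ and $p_2=4+3\epsilon$. For a suitable $\epsilon>0$ (e.g. any sufficiently small $\epsilon>0$), this instance has no strong Nash equilibrium.
   Context: An instance of the Sharing with Friendship game consists of: - players $N=\{1,\dots,n\}$; - machines $M=\{1,\dots,m\}$ with values $p_1,\dots,p_m\ge0$; - a simple undirected graph $G=(N,E)$. A state is $\vec s\in M^n$, with $X_k(\vec s)=\{i:s_i=k\}$ and $x_k(\vec s)=|X_k(\vec s)|$. The utility of player $i$ with $s_i=k$ is $$u_i(\vec s)=\frac{p_k}{x_k(\vec s)}+\#\{j\in X_k(\vec s):\{i,j\}\in E\}.$$ A state $\vec s$ is a strong Nash equilibrium if for every nonempty coalition $C\subseteq N$ and every joint deviation $\vec s_C'\in M^C$, some $i\in C$ has $u_i(\vec s)\ge u_i(\vec s_C',\vec s_{-C})$. *)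

theory Defs
  imports Complex_Main
begin

text \<open>A state is a function s :: nat => nat
 with s i in {1..m} for every player i in {1..n} (values outside {1..n} irrelevant).\<close>

definition simple_graph :: "nat \<Rightarrow> (nat \<Rightarrow> nat \<Rightarrow> bool) \<Rightarrow> bool" where
  "simple_graph n E \<longleftrightarrow> (\<forall>i j. E i j \<longrightarrow> i \<in> {1..n} \<and> j \<in> {1..n} \<and> i \<noteq> j \<and> E j i)"

definition is_state :: "nat \<Rightarrow> nat \<Rightarrow> (nat \<Rightarrow> nat) \<Rightarrow> bool" where
  "is_state n m s \<longleftrightarrow> (\<forall>i\<in>{1..n}. s i \<in> {1..m})"

definition load_set :: "nat \<Rightarrow> (nat \<Rightarrow> nat) \<Rightarrow> nat \<Rightarrow> nat set" where
  "load_set n s k = {i\<in>{1..n}. s i = k}"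

definition utility :: "nat \<Rightarrow> (nat \<Rightarrow> real) \<Rightarrow> (nat \<Rightarrow> nat \<Rightarrow> bool) \<Rightarrow> (nat \<Rightarrow> nat) \<Rightarrow> nat \<Rightarrow> real" where
  "utility n p E s i =
     p (s i) / real (card (load_set n s (s i))) + real (card {j\<in>load_set n s (s i). E i j})"

definition strong_NE :: "nat \<Rightarrow> nat \<Rightarrow> (nat \<Rightarrow> real) \<Rightarrow> (nat \<Rightarrow> nat \<Rightarrow> bool) \<Rightarrow> (nat \<Rightarrow> nat) \<Rightarrow> bool" where
  "strong_NE n m p E s \<longleftrightarrow> is_state n m s \<and>
     (\<forall>C s'. C \<subseteq> {1..n} \<longrightarrow> C \<noteq> {} \<longrightarrow> (\<forall>i\<in>C. s' i \<in> {1..m}) \<longrightarrow>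
        (\<exists>i\<in>C. utility n p E s i \<ge> utility n p E (\<lambda>j. if j \<in> C then s' j else s j) i))"

definition friend_E :: "nat \<Rightarrow> nat \<Rightarrow> bool" where
  "friend_E i j \<longleftrightarrow> {i, j} = {1, 2} \<or> {i, j} = {3, 4::nat}"

definition machine_values :: "real \<Rightarrow> nat \<Rightarrow> real" where
  "machine_values \<epsilon> k = (if k = 1 then 2 + \<epsilon> else if k = 2 then 4 + 3 * \<epsilon> else 0)"

end

theory Submission
  imports Defs
begin

lemma fE: "friend_E i j \<longleftrightarrow> (i=1\<and>j=2)\<or>(i=2\<and>j=1)\<or>(i=3\<and>j=4)\<or>(i=4\<and>j=3)"
  unfolding friend_E_def by (auto simp: doubleton_eq_iff)

definition ind :: "bool \<Rightarrow> nat" where "ind b = (if b then 1 else 0)"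

lemma ls: "load_set 4 s k = (if s 1 = k then {1} else {}) \<union> (if s 2 = k then {2} else {})
   \<union> (if s 3 = k then {3} else {}) \<union> (if s 4 = k then {4} else {})"
proof -
  have "{1..4::nat} = {1,2,3,4}" by auto
  then show ?thesis unfolding load_set_def by auto
qed

lemma cnt: "card (load_set 4 s k) = ind (s 1 = k) + ind (s 2 = k) + ind (s 3 = k) + ind (s 4 = k)"
  unfolding ls ind_def by (auto simp: card_insert_if)

lemma fr1: "{j\<in>load_set 4 s (s 1). friend_E 1 j} = (if s 2 = s 1 then {2} else {})"
  unfolding load_set_def fE by (auto simp: atLeastAtMost_iff)
lemma fr2: "{j\<in>load_set 4 s (s 2). friend_E 2 j} = (if s 1 = s 2 then {1} else {})"
  unfolding load_set_def fE by (auto simp: atLeastAtMost_iff)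
lemma fr3: "{j\<in>load_set 4 s (s 3). friend_E 3 j} = (if s 4 = s 3 then {4} else {})"
  unfolding load_set_def fE by (auto simp: atLeastAtMost_iff)
lemma fr4: "{j\<in>load_set 4 s (s 4). friend_E 4 j} = (if s 3 = s 4 then {3} else {})"
  unfolding load_set_def fE by (auto simp: atLeastAtMost_iff)

lemma u1: "utility 4 p friend_E s 1 = p (s 1) / real (ind (s 1 = s 1) + ind (s 2 = s 1) + ind (s 3 = s 1) + ind (s 4 = s 1)) + (if s 2 = s 1 then 1 else 0)"
  unfolding utility_def cnt fr1 by simp
lemma u2: "utility 4 p friend_E s 2 = p (s 2) / real (ind (s 1 = s 2) + ind (s 2 = s 2) + ind (s 3 = s 2) + ind (s 4 = s 2)) + (if s 1 = s 2 then 1 else 0)"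
  unfolding utility_def cnt fr2 by simp
lemma u3: "utility 4 p friend_E s 3 = p (s 3) / real (ind (s 1 = s 3) + ind (s 2 = s 3) + ind (s 3 = s 3) + ind (s 4 = s 3)) + (if s 4 = s 3 then 1 else 0)"
  unfolding utility_def cnt fr3 by simp
lemma u4: "utility 4 p friend_E s 4 = p (s 4) / real (ind (s 1 = s 4) + ind (s 2 = s 4) + ind (s 3 = s 4) + ind (s 4 = s 4)) + (if s 3 = s 4 then 1 else 0)"
  unfolding utility_def cnt fr4 by simp

theorem theorem20:
  shows "simple_graph 4 friend_E \<and>
    (\<exists>\<delta>>0. \<forall>\<epsilon>::real. 0 < \<epsilon> \<and> \<epsilon> < \<delta> \<longrightarrow>
       \<not> (\<exists>s. strong_NE 4 2 (machine_values \<epsilon>) friend_E s))"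
proof
  show "simple_graph 4 friend_E" unfolding simple_graph_def fE by auto
  show "\<exists>\<delta>>0. \<forall>\<epsilon>::real. 0 < \<epsilon> \<and> \<epsilon> < \<delta> \<longrightarrow>
       \<not> (\<exists>s. strong_NE 4 2 (machine_values \<epsilon>) friend_E s)"
  proof (intro exI[of _ "1/10"] conjI allI impI notI)
    fix e :: real and s
    assume e: "0 < e \<and> e < 1/10" and "\<exists>s. strong_NE 4 2 (machine_values e) friend_E s"
    then obtain s where ne: "strong_NE 4 2 (machine_values e) friend_E s" by blast
    have st: "s i \<in> {1,2}" if "i \<in> {1..4}" for i
      using ne that unfolding strong_NE_def is_state_def by fastforce
    have key: "\<exists>i\<in>C. utility 4 (machine_values e) friend_E s i
       \<ge> utility 4 (machine_values e) friend_E (\<lambda>j. if j \<in> C then c else s j) i"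
      if "C \<subseteq> {1..4}" "C \<noteq> {}" "c \<in> {1,2}" for C c
      using ne that unfolding strong_NE_def by (auto)
    note U = u1[unfolded One_nat_def] u1 u2 u3 u4 ind_def machine_values_def
    have s1: "s 1 \<in> {1,2}" and s2: "s 2 \<in> {1,2}" and s3: "s 3 \<in> {1,2}" and s4: "s 4 \<in> {1,2}"
      using st by auto
    have "\<not>(s 1 = 1 \<and> s 2 = 1 \<and> s 3 = 1 \<and> s 4 = 1)"
    proof
      assume h: "s 1 = 1 \<and> s 2 = 1 \<and> s 3 = 1 \<and> s 4 = 1"
      from key[of "{1}" 2] show False using h e by (simp add: U field_simps)
    qed
    moreover have "\<not>(s 1 = 1 \<and> s 2 = 1 \<and> s 3 = 1 \<and> s 4 = 2)"
    proof
      assume h: "s 1 = 1 \<and> s 2 = 1 \<and> s 3 = 1 \<and> s 4 = 2"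
      from key[of "{1}" 2] show False using h e by (simp add: U field_simps)
    qed
    moreover have "\<not>(s 1 = 1 \<and> s 2 = 1 \<and> s 3 = 2 \<and> s 4 = 1)"
    proof
      assume h: "s 1 = 1 \<and> s 2 = 1 \<and> s 3 = 2 \<and> s 4 = 1"
      from key[of "{1}" 2] show False using h e by (simp add: U field_simps)
    qed
    moreover have "\<not>(s 1 = 1 \<and> s 2 = 1 \<and> s 3 = 2 \<and> s 4 = 2)"
    proof
      assume h: "s 1 = 1 \<and> s 2 = 1 \<and> s 3 = 2 \<and> s 4 = 2"
      from key[of "{1,2}" 2] show False using h e by (simp add: U field_simps)
    qed
    moreover have "\<not>(s 1 = 1 \<and> s 2 = 2 \<and> s 3 = 1 \<and> s 4 = 1)"
    proof
      assume h: "s 1 = 1 \<and> s 2 = 2 \<and> s 3 = 1 \<and> s 4 = 1"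
      from key[of "{1}" 2] show False using h e by (simp add: U field_simps)
    qed
    moreover have "\<not>(s 1 = 1 \<and> s 2 = 2 \<and> s 3 = 1 \<and> s 4 = 2)"
    proof
      assume h: "s 1 = 1 \<and> s 2 = 2 \<and> s 3 = 1 \<and> s 4 = 2"
      from key[of "{1}" 2] show False using h e by (simp add: U field_simps)
    qed
    moreover have "\<not>(s 1 = 1 \<and> s 2 = 2 \<and> s 3 = 2 \<and> s 4 = 1)"
    proof
      assume h: "s 1 = 1 \<and> s 2 = 2 \<and> s 3 = 2 \<and> s 4 = 1"
      from key[of "{1}" 2] show False using h e by (simp add: U field_simps)
    qed
    moreover have "\<not>(s 1 = 1 \<and> s 2 = 2 \<and> s 3 = 2 \<and> s 4 = 2)"
    proof
      assume h: "s 1 = 1 \<and> s 2 = 2 \<and> s 3 = 2 \<and> s 4 = 2"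
      from key[of "{2}" 1] show False using h e by (simp add: U field_simps)
    qed
    moreover have "\<not>(s 1 = 2 \<and> s 2 = 1 \<and> s 3 = 1 \<and> s 4 = 1)"
    proof
      assume h: "s 1 = 2 \<and> s 2 = 1 \<and> s 3 = 1 \<and> s 4 = 1"
      from key[of "{2}" 2] show False using h e by (simp add: U field_simps)
    qed
    moreover have "\<not>(s 1 = 2 \<and> s 2 = 1 \<and> s 3 = 1 \<and> s 4 = 2)"
    proof
      assume h: "s 1 = 2 \<and> s 2 = 1 \<and> s 3 = 1 \<and> s 4 = 2"
      from key[of "{2}" 2] show False using h e by (simp add: U field_simps)
    qed
    moreover have "\<not>(s 1 = 2 \<and> s 2 = 1 \<and> s 3 = 2 \<and> s 4 = 1)"
    proof
      assume h: "s 1 = 2 \<and> s 2 = 1 \<and> s 3 = 2 \<and> s 4 = 1"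
      from key[of "{2}" 2] show False using h e by (simp add: U field_simps)
    qed
    moreover have "\<not>(s 1 = 2 \<and> s 2 = 1 \<and> s 3 = 2 \<and> s 4 = 2)"
    proof
      assume h: "s 1 = 2 \<and> s 2 = 1 \<and> s 3 = 2 \<and> s 4 = 2"
      from key[of "{1}" 1] show False using h e by (simp add: U field_simps)
    qed
    moreover have "\<not>(s 1 = 2 \<and> s 2 = 2 \<and> s 3 = 1 \<and> s 4 = 1)"
    proof
      assume h: "s 1 = 2 \<and> s 2 = 2 \<and> s 3 = 1 \<and> s 4 = 1"
      from key[of "{3,4}" 2] show False using h e by (simp add: U field_simps)
    qed
    moreover have "\<not>(s 1 = 2 \<and> s 2 = 2 \<and> s 3 = 1 \<and> s 4 = 2)"
    proof
      assume h: "s 1 = 2 \<and> s 2 = 2 \<and> s 3 = 1 \<and> s 4 = 2"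
      from key[of "{4}" 1] show False using h e by (simp add: U field_simps)
    qed
    moreover have "\<not>(s 1 = 2 \<and> s 2 = 2 \<and> s 3 = 2 \<and> s 4 = 1)"
    proof
      assume h: "s 1 = 2 \<and> s 2 = 2 \<and> s 3 = 2 \<and> s 4 = 1"
      from key[of "{3}" 1] show False using h e by (simp add: U field_simps)
    qed
    moreover have "\<not>(s 1 = 2 \<and> s 2 = 2 \<and> s 3 = 2 \<and> s 4 = 2)"
    proof
      assume h: "s 1 = 2 \<and> s 2 = 2 \<and> s 3 = 2 \<and> s 4 = 2"
      from key[of "{1}" 1] show False using h e by (simp add: U field_simps)
    qed

    ultimately show False using s1 s2 s3 s4 by auto
  qed simp
qed

end
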